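(* Let $\ket\psi$ be an $n$-qubit stabilizer state, $S=\mathrm{Weyl}(\ket\psi)$, and $T\subseteq S$ a subspace of dimension $n-t$. Then there exists a Clifford circuit $C$ such that $C\ket\psi=\ket{0^n}$, $C(S)=0^n\times\mathbb F_2^n$, and $C(T)=0^{n+t}\times\mathbb F_2^{n-t}$.
   Context: For $x=(a,b)\in\mathbb F_2^{2n}$, $W_x = i^{a\cdot b}X^{a_1}Z^{b_1}\otimes\cdots\otimes X^{a_n}Z^{b_n}$ ($a\cdot b$ over the integers); $\mathrm{Weyl}(\ket\psi)=\{x:W_x\ket\psi=\pm\ket\psi\}$. A Clifford circuit $C$ acts on $\mathbb F_2^{2n}$ by: $C(x)=y$ where $y$ is the unique element with $CW_xC^\dagger=\pm W_y$; for a set $A$, $C(A)=\{C(x):x\in A\}$. Equalities of states such as $C\ket\psi=\ket{0^n}$ are up to global phase. *)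

theory Defs
  imports "HOL-Analysis.Analysis" "HOL-Library.Z2"
begin

text \<open>Qubits are indexed by a finite linearly ordered type 'n (n = CARD('n)); the order
  fixes the ordering of the qubits 1..n. The computational basis of the n-qubit space
  is indexed by bitstrings 'n => bool (False = 0, True = 1).\<close>

type_synonym 'n qstate = "complex ^ ('n \<Rightarrow> bool)"
type_synonym 'n qop = "complex ^ ('n \<Rightarrow> bool) ^ ('n \<Rightarrow> bool)"
type_synonym qop1 = "complex ^ bool ^ bool"

definition adjoint_op :: "complex ^ 'a ^ 'a \<Rightarrow> complex ^ 'a ^ 'a" where
  "adjoint_op A = (\<chi> i j. cnj (A $ j $ i))"

definition tensor :: "('n::finite \<Rightarrow> qop1) \<Rightarrow> 'n qop" where
  "tensor U = (\<chi> r c. \<Prod>j\<in>UNIV. U j $ (r j) $ (c j))"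

definition ket0 :: "'n::finite qstate" where
  "ket0 = (\<chi> c. if c = (\<lambda>_. False) then 1 else 0)"

definition pauliI :: qop1 where "pauliI = (\<chi> r c. if r = c then 1 else 0)"
definition pauliX :: qop1 where "pauliX = (\<chi> r c. if r \<noteq> c then 1 else 0)"
definition pauliZ :: qop1 where
  "pauliZ = (\<chi> r c. if r = c then (if c then -1 else 1) else 0)"
definition hadamard :: qop1 where
  "hadamard = (\<chi> r c. (if r \<and> c then -1 else 1) / complex_of_real (sqrt 2))"
definition phaseS :: qop1 where
  "phaseS = (\<chi> r c. if r = c then (if c then \<i> else 1) else 0)"

definition on_qubit :: "'n \<Rightarrow> qop1 \<Rightarrow> 'n::finite qop" where
  "on_qubit j G = tensor (\<lambda>k. if k = j then G else pauliI)"

definition cnot :: "'n \<Rightarrow> 'n \<Rightarrow> 'n::finite qop" where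
  "cnot j k = (\<chi> r c. if r = c(k := (c k \<noteq> c j)) then 1 else 0)"

inductive_set clifford_circuits :: "'n::finite qop set" where
  id_circ: "mat 1 \<in> clifford_circuits"
| H_gate: "C \<in> clifford_circuits \<Longrightarrow> on_qubit j hadamard ** C \<in> clifford_circuits"
| S_gate: "C \<in> clifford_circuits \<Longrightarrow> on_qubit j phaseS ** C \<in> clifford_circuits"
| CNOT_gate: "C \<in> clifford_circuits \<Longrightarrow> j \<noteq> k \<Longrightarrow> cnot j k ** C \<in> clifford_circuits"

definition eq_up_to_phase :: "'n::finite qstate \<Rightarrow> 'n qstate \<Rightarrow> bool" where
  "eq_up_to_phase \<phi> \<psi> \<longleftrightarrow> (\<exists>\<omega>::complex. cmod \<omega> = 1 \<and> \<phi> = \<omega> *s \<psi>)"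

definition stabilizer_state :: "'n::finite qstate \<Rightarrow> bool" where
  "stabilizer_state \<psi> \<longleftrightarrow> (\<exists>C\<in>clifford_circuits. eq_up_to_phase \<psi> (C *v ket0))"

text \<open>An element x of F_2^{2n} is x :: bit^('n + 'n), with x = (a,b),
  a_j = x $ Inl j and b_j = x $ Inr j.\<close>

definition xpart :: "bit ^ ('n::finite + 'n) \<Rightarrow> 'n \<Rightarrow> bool" where
  "xpart x j = (x $ Inl j = 1)"
definition zpart :: "bit ^ ('n::finite + 'n) \<Rightarrow> 'n \<Rightarrow> bool" where
  "zpart x j = (x $ Inr j = 1)"

definition weyl :: "bit ^ ('n + 'n) \<Rightarrow> 'n::finite qop" where
  "weyl x = (\<chi> r c. \<i> ^ card {j. xpart x j \<and> zpart x j} *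
     tensor (\<lambda>j. (if xpart x j then pauliX else pauliI) ** (if zpart x j then pauliZ else pauliI)) $ r $ c)"

definition Weyl_set :: "'n::finite qstate \<Rightarrow> (bit ^ ('n + 'n)) set" where
  "Weyl_set \<psi> = {x. weyl x *v \<psi> = \<psi> \<or> weyl x *v \<psi> = - \<psi>}"

definition clifford_act :: "'n::finite qop \<Rightarrow> bit ^ ('n + 'n) \<Rightarrow> bit ^ ('n + 'n)" where
  "clifford_act C x = (THE y. C ** weyl x ** adjoint_op C = weyl y \<or>
                              C ** weyl x ** adjoint_op C = - weyl y)"

text \<open>Position (0-based) of qubit j in the ordering of the qubits.\<close>
definition qpos :: "'n::{finite,linorder} \<Rightarrow> nat" where
  "qpos j = card {k. k < j}"

end

theory Submission
  imports Defs "HOL-Library.FuncSet"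
begin

definition smat :: "complex \<Rightarrow> complex ^'a^'a \<Rightarrow> complex^'a^'a" where
  "smat k M = (\<chi> r c. k * M $ r $ c)"

lemma smat_entry[simp]: "smat k M $ r $ c = k * M $ r $ c"
  by (simp add: smat_def)

lemma smat_mult_left: "smat k A ** B = smat k (A ** B)"
  by (simp add: vec_eq_iff matrix_matrix_mult_def sum_distrib_left mult.assoc)

lemma smat_mult_right: "A ** smat k B = smat k (A ** B)"
  by (simp add: vec_eq_iff matrix_matrix_mult_def sum_distrib_left mult.assoc mult.left_commute)

lemma smat_smat: "smat k (smat l A) = smat (k * l) A"
  by (simp add: vec_eq_iff mult.assoc)

lemma smat_one[simp]: "smat 1 A = A"
  by (simp add: vec_eq_iff)

lemma smat_m1: "smat (-1) A = - A"
  by (simp add: vec_eq_iff)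

lemma adjoint_entry[simp]: "adjoint_op A $ i $ j = cnj (A $ j $ i)"
  by (simp add: adjoint_op_def)

lemma adjoint_mult: "adjoint_op (A ** B) = adjoint_op B ** adjoint_op A"
  by (simp add: vec_eq_iff matrix_matrix_mult_def mult.commute)

lemma adjoint_adjoint[simp]: "adjoint_op (adjoint_op A) = A"
  by (simp add: vec_eq_iff)

lemma adjoint_mat1[simp]: "adjoint_op (mat 1 :: complex^'a^'a) = mat 1"
  by (simp add: vec_eq_iff mat_def)

lemma adjoint_smat: "adjoint_op (smat k A) = smat (cnj k) (adjoint_op A)"
  by (simp add: vec_eq_iff)

lemma adjoint_uminus: "adjoint_op (- A) = - adjoint_op A"
  by (simp add: vec_eq_iff)

lemma uminus_mult_left: "(- A) ** B = - (A ** B)" for A B :: "complex^'a^'a"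
  by (simp add: vec_eq_iff matrix_matrix_mult_def sum_negf)

lemma uminus_mult_right: "A ** (- B) = - (A ** B)" for A B :: "complex^'a^'a"
  by (simp add: vec_eq_iff matrix_matrix_mult_def sum_negf)

lemma tensor_entry: "tensor U $ r $ c = (\<Prod>j\<in>UNIV. U j $ (r j) $ (c j))"
  by (simp add: tensor_def)

lemma sum_bool: "(\<Sum>b\<in>(UNIV::bool set). f b) = f True + f False"
  by (simp add: UNIV_bool add.commute)

lemma tensor_mult: "tensor U ** tensor V = tensor (\<lambda>j. U j ** V j)"
proof -
  have "(\<Sum>p\<in>UNIV. (\<Prod>j\<in>UNIV. U j $ r j $ p j) * (\<Prod>j\<in>UNIV. V j $ p j $ c j))
        = (\<Prod>j\<in>UNIV. \<Sum>b\<in>UNIV. U j $ r j $ b * V j $ b $ c j)" for r c :: "'a \<Rightarrow> bool"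
  proof -
    have "(\<Prod>j\<in>UNIV. \<Sum>b\<in>UNIV. U j $ r j $ b * V j $ b $ c j)
       = (\<Sum>g\<in>PiE UNIV (\<lambda>_. UNIV). \<Prod>j\<in>UNIV. U j $ r j $ g j * V j $ g j $ c j)"
      by (rule prod_sum_PiE) auto
    also have "\<dots> = (\<Sum>p\<in>UNIV. (\<Prod>j\<in>UNIV. U j $ r j $ p j) * (\<Prod>j\<in>UNIV. V j $ p j $ c j))"
      by (simp add: PiE_UNIV_domain prod.distrib)
    finally show ?thesis by simp
  qed
  then show ?thesis
    by (simp add: vec_eq_iff matrix_matrix_mult_def tensor_entry)
qed

lemma tensor_adjoint: "adjoint_op (tensor U) = tensor (\<lambda>j. adjoint_op (U j))"
  by (simp add: vec_eq_iff tensor_entry)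

lemma tensor_id: "tensor (\<lambda>_. pauliI) = mat 1"
proof -
  have "(\<Prod>j\<in>UNIV. pauliI $ r j $ c j) = (if r = c then 1 else 0)" for r c :: "'a \<Rightarrow> bool"
  proof (cases "r = c")
    case True then show ?thesis by (simp add: pauliI_def)
  next
    case False
    then obtain j where "r j \<noteq> c j" by auto
    then have "pauliI $ r j $ c j = 0" by (simp add: pauliI_def)
    then show ?thesis using False by (simp add: prod_zero_iff) (metis \<open>r j \<noteq> c j\<close> pauliI_def vec_lambda_beta)
  qed
  then show ?thesis by (simp add: vec_eq_iff tensor_entry mat_def)
qed

lemma prod_if_const: "(\<Prod>j\<in>(UNIV::'a::finite set). if P j then a else 1) = a ^ card {j. P j}"
  by (simp add: prod.If_cases Int_def)

definition ppauli :: "bool \<Rightarrow> bool \<Rightarrow> qop1" where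
  "ppauli a b = (\<chi> r c. (if a \<and> b then \<i> else 1) * (if r = (c \<noteq> a) then (if b \<and> c then -1 else 1) else 0))"

lemma ppauli_entry: "ppauli a b $ r $ c = (if a \<and> b then \<i> else 1) * (if r = (c \<noteq> a) then (if b \<and> c then -1 else 1) else 0)"
  by (simp add: ppauli_def)

lemma pm_entry: "((if a then pauliX else pauliI) ** (if b then pauliZ else pauliI)) $ r $ c
   = (if r = (c \<noteq> a) then (if b \<and> c then -1 else 1) else 0)"
  by (cases a; cases b; cases r; cases c) (simp_all add: matrix_matrix_mult_def sum_bool pauliX_def pauliZ_def pauliI_def)

lemma sqrt2_sq: "(1 / complex_of_real (sqrt 2)) * (1 / complex_of_real (sqrt 2)) = 1/2"
proof -
  have h: "complex_of_real (sqrt 2) * complex_of_real (sqrt 2) = 2"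
    by (simp flip: of_real_mult)
  have "(1 / complex_of_real (sqrt 2)) * (1 / complex_of_real (sqrt 2)) = 1 / (complex_of_real (sqrt 2) * complex_of_real (sqrt 2))"
    by (simp only: times_divide_times_eq) simp
  then show ?thesis by (simp only: h)
qed

lemma sqrt2c: "complex_of_real (sqrt 2) * complex_of_real (sqrt 2) = 2"
  by (simp flip: of_real_mult)

lemma q1_eq: "(A::qop1) = B \<longleftrightarrow> (\<forall>r c. A $ r $ c = B $ r $ c)"
  by (simp add: vec_eq_iff)

lemma mult_entry1: "((A::qop1) ** B) $ r $ c = A $ r $ True * B $ True $ c + A $ r $ False * B $ False $ c"
  by (simp add: matrix_matrix_mult_def sum_bool)

lemma had_adj: "adjoint_op hadamard = hadamard"
  by (simp add: q1_eq hadamard_def)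

lemma had_entry: "hadamard $ r $ c = (if r \<and> c then -1 else 1) * (1 / complex_of_real (sqrt 2))"
  by (simp add: hadamard_def)

lemma weyl_tensor: "weyl x = tensor (\<lambda>j. ppauli (xpart x j) (zpart x j))"
proof -
  have "\<i> ^ card {j. xpart x j \<and> zpart x j} = (\<Prod>j\<in>UNIV. if xpart x j \<and> zpart x j then \<i> else 1)"
    by (simp add: prod_if_const)
  then show ?thesis
    by (simp add: vec_eq_iff weyl_def tensor_entry pm_entry ppauli_entry prod.distrib)
qed


lemma had_unit: "hadamard ** hadamard = pauliI"
  by (simp add: q1_eq mult_entry1 had_entry pauliI_def all_bool_eq sqrt2_sq sqrt2c) 

lemma S_adj: "adjoint_op phaseS = phaseS ** phaseS ** phaseS"
  by (simp add: q1_eq mult_entry1 phaseS_def all_bool_eq)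

lemma S_unit1: "phaseS ** adjoint_op phaseS = pauliI"
  by (simp add: q1_eq mult_entry1 phaseS_def pauliI_def all_bool_eq)

lemma S_unit2: "adjoint_op phaseS ** phaseS = pauliI"
  by (simp add: q1_eq mult_entry1 phaseS_def pauliI_def all_bool_eq)

lemma I_adj: "adjoint_op pauliI = pauliI"
  by (simp add: q1_eq pauliI_def all_bool_eq)

lemma I_conj: "pauliI ** P ** adjoint_op pauliI = P"
  by (simp add: q1_eq mult_entry1 pauliI_def all_bool_eq)

lemma had_conj: "hadamard ** ppauli a b ** adjoint_op hadamard = smat (if a \<and> b then -1 else 1) (ppauli b a)"
  apply (simp add: had_adj)
  apply (cases a; cases b) 
  apply (simp_all add: q1_eq mult_entry1 had_entry ppauli_entry all_bool_eq sqrt2c)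
  done
lemma S_conj: "phaseS ** ppauli a b ** adjoint_op phaseS = smat (if a \<and> b then -1 else 1) (ppauli a (a \<noteq> b))"
  by (cases a; cases b) (simp_all add: q1_eq mult_entry1 phaseS_def ppauli_entry all_bool_eq)

lemma on_qubit_entry: "on_qubit j G = tensor (\<lambda>k. if k = j then G else pauliI)"
  by (simp add: on_qubit_def)

lemma pauliI_mat: "pauliI = mat 1"
  by (simp add: vec_eq_iff pauliI_def mat_def)
lemma I_mult_l[simp]: "pauliI ** A = A"
  by (simp add: pauliI_mat)
lemma I_mult_r[simp]: "A ** pauliI = A"
  by (simp add: pauliI_mat)

lemma on_qubit_mult: "on_qubit j G ** on_qubit j G' = on_qubit j (G ** G')"
  unfolding on_qubit_def tensor_mult
  by (rule arg_cong[where f=tensor]) (auto simp: I_adj)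

lemma on_qubit_adj: "adjoint_op (on_qubit j G) = on_qubit j (adjoint_op G)"
  unfolding on_qubit_def tensor_adjoint
  by (rule arg_cong[where f=tensor]) (auto simp: I_adj)

lemma on_qubit_I: "on_qubit j pauliI = mat 1"
  unfolding on_qubit_def by (simp add: tensor_id)

lemma on_qubit_conj: "on_qubit j G ** tensor P ** adjoint_op (on_qubit j G)
   = tensor (\<lambda>k. if k = j then G ** P k ** adjoint_op G else P k)"
  unfolding on_qubit_adj unfolding on_qubit_def tensor_mult
  by (rule arg_cong[where f=tensor]) (auto simp: I_adj)

lemma tensor_smat_at: "tensor (\<lambda>k. if k = j then smat (s k) (A k) else B k) = smat (s j) (tensor (\<lambda>k. if k = j then A k else B k))"
proof -
  have "(\<Prod>k\<in>UNIV. (if k = j then smat (s k) (A k) else B k) $ r k $ c k)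
      = (\<Prod>k\<in>UNIV. (if k = j then s j else 1) * (if k = j then A k else B k) $ r k $ c k)" for r c :: "'a \<Rightarrow> bool"
    by (rule prod.cong) auto
  also have "\<dots> r c = s j * (\<Prod>k\<in>UNIV. (if k = j then A k else B k) $ r k $ c k)" for r c
    by (simp add: prod.distrib)
  finally show ?thesis by (simp add: vec_eq_iff tensor_entry)
qed

definition hact :: "'n \<Rightarrow> bit ^ ('n + 'n) \<Rightarrow> bit ^ ('n::finite + 'n)" where
  "hact j x = (\<chi> i. case i of Inl k \<Rightarrow> if k = j then x $ Inr j else x $ Inl k
                              | Inr k \<Rightarrow> if k = j then x $ Inl j else x $ Inr k)"
definition sact :: "'n \<Rightarrow> bit ^ ('n + 'n) \<Rightarrow> bit ^ ('n::finite + 'n)" where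
  "sact j x = (\<chi> i. case i of Inl k \<Rightarrow> x $ Inl k
                              | Inr k \<Rightarrow> if k = j then x $ Inr j + x $ Inl j else x $ Inr k)"
definition cact :: "'n \<Rightarrow> 'n \<Rightarrow> bit ^ ('n + 'n) \<Rightarrow> bit ^ ('n::finite + 'n)" where
  "cact j k x = (\<chi> i. case i of Inl l \<Rightarrow> if l = k then x $ Inl k + x $ Inl j else x $ Inl l
                              | Inr l \<Rightarrow> if l = j then x $ Inr j + x $ Inr k else x $ Inr l)"

lemma bit_add_one: "((a::bit) + b = 1) \<longleftrightarrow> ((a = 1) \<noteq> (b = 1))"
  by (cases a; cases b) simp_all

lemma hact_parts: "xpart (hact j x) k = (if k = j then zpart x j else xpart x k)"
   "zpart (hact j x) k = (if k = j then xpart x j else zpart x k)"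
  by (simp_all add: hact_def xpart_def zpart_def)

lemma sact_parts: "xpart (sact j x) k = xpart x k"
   "zpart (sact j x) k = (if k = j then xpart x j \<noteq> zpart x j else zpart x k)"
  by (auto simp add: sact_def xpart_def zpart_def bit_add_one)

lemma cact_parts: "xpart (cact j k x) l = (if l = k then xpart x k \<noteq> xpart x j else xpart x l)"
   "zpart (cact j k x) l = (if l = j then zpart x j \<noteq> zpart x k else zpart x l)"
  by (auto simp add: cact_def xpart_def zpart_def bit_add_one)

definition cj :: "'n::finite qop \<Rightarrow> bit ^ ('n + 'n) \<Rightarrow> bit ^ ('n + 'n) \<Rightarrow> bool" where
  "cj C x y \<longleftrightarrow> (C ** weyl x ** adjoint_op C = weyl y \<or> C ** weyl x ** adjoint_op C = - weyl y)"

lemma cj_smat: "C ** weyl x ** adjoint_op C = smat (if P then -1 else 1) (weyl y) \<Longrightarrow> cj C x y"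
  by (cases P) (auto simp: cj_def smat_m1)

lemma had_cj: "cj (on_qubit j hadamard) x (hact j x)"
proof (rule cj_smat)
  show "on_qubit j hadamard ** weyl x ** adjoint_op (on_qubit j hadamard) =
    smat (if xpart x j \<and> zpart x j then -1 else 1) (weyl (hact j x))"
    unfolding weyl_tensor on_qubit_conj had_conj
    by (subst tensor_smat_at) (auto intro!: arg_cong[where f="smat _"] arg_cong[where f=tensor] simp: hact_parts)
qed

lemma S_cj: "cj (on_qubit j phaseS) x (sact j x)"
proof (rule cj_smat)
  show "on_qubit j phaseS ** weyl x ** adjoint_op (on_qubit j phaseS) =
    smat (if xpart x j \<and> zpart x j then -1 else 1) (weyl (sact j x))"
    unfolding weyl_tensor on_qubit_conj S_conj
    by (subst tensor_smat_at) (auto intro!: arg_cong[where f="smat _"] arg_cong[where f=tensor] simp: sact_parts)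
qed

definition flip :: "'n \<Rightarrow> 'n \<Rightarrow> ('n \<Rightarrow> bool) \<Rightarrow> ('n \<Rightarrow> bool)" where
  "flip j k c = c(k := (c k \<noteq> c j))"

lemma flip_flip: "j \<noteq> k \<Longrightarrow> flip j k (flip j k c) = c"
  by (auto simp: flip_def fun_eq_iff)

lemma flip_eq_iff: "j \<noteq> k \<Longrightarrow> (r = flip j k p) \<longleftrightarrow> (p = flip j k r)"
  by (metis flip_flip)

lemma cnot_entry: "cnot j k $ r $ c = (if r = flip j k c then 1 else 0)"
  by (simp add: cnot_def flip_def)

lemma cnot_mult_left: assumes "j \<noteq> k" shows "(cnot j k ** M) $ r $ c = M $ (flip j k r) $ c"
proof -
  have "(cnot j k ** M) $ r $ c = (\<Sum>p\<in>UNIV. if p = flip j k r then M $ p $ c else 0)"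
    unfolding matrix_matrix_mult_def using assms by (simp only: vec_lambda_beta) (rule sum.cong, auto simp: cnot_entry flip_eq_iff)
  then show ?thesis by simp
qed

lemma mult_adj_cnot: assumes "j \<noteq> k" shows "(M ** adjoint_op (cnot j k)) $ r $ c = M $ r $ (flip j k c)"
proof -
  have "(M ** adjoint_op (cnot j k)) $ r $ c = (\<Sum>p\<in>UNIV. if p = flip j k c then M $ r $ p else 0)"
    unfolding matrix_matrix_mult_def using assms by (simp only: vec_lambda_beta) (rule sum.cong, auto simp: cnot_entry flip_eq_iff)
  then show ?thesis by simp
qed

lemma prod_split2: "j \<noteq> k \<Longrightarrow> (\<Prod>l\<in>(UNIV::'a::finite set). f l) = f j * f k * (\<Prod>l\<in>UNIV - {j, k}. f l)"
proof -
  assume "j \<noteq> k"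
  have "(\<Prod>l\<in>UNIV. f l) = f j * (\<Prod>l\<in>UNIV - {j}. f l)"
    by (simp add: prod.remove)
  also have "(\<Prod>l\<in>UNIV - {j}. f l) = f k * (\<Prod>l\<in>UNIV - {j} - {k}. f l)"
    using \<open>j \<noteq> k\<close> by (subst prod.remove[of _ k]) auto
  finally show ?thesis by (simp add: Diff_insert2[symmetric] insert_commute mult.assoc)
qed

lemma loc2: "ppauli aj bj $ rj $ qj * ppauli ak bk $ (rk \<noteq> rj) $ (qk \<noteq> qj)
  = (if aj \<and> bk \<and> (bj = ak) then -1 else 1) * (ppauli aj (bj \<noteq> bk) $ rj $ qj * ppauli (ak \<noteq> aj) bk $ rk $ qk)"
  by (cases aj; cases bj; cases ak; cases bk; cases rj; cases rk; cases qj; cases qk) (simp_all add: ppauli_entry)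

lemma cnot_cj: assumes "j \<noteq> k" shows "cj (cnot j k) x (cact j k x)"
proof (rule cj_smat)
  let ?s = "if xpart x j \<and> zpart x k \<and> (zpart x j = xpart x k) then -1 else (1::complex)"
  let ?f = "\<lambda>r c l. ppauli (xpart x l) (zpart x l) $ flip j k r l $ flip j k c l"
  let ?g = "\<lambda>r c l. ppauli (xpart (cact j k x) l) (zpart (cact j k x) l) $ r l $ c l"
  have "(\<Prod>l\<in>UNIV. ?f r c l) = ?s * (\<Prod>l\<in>UNIV. ?g r c l)" for r c
  proof -
    have rest: "(\<Prod>l\<in>UNIV - {j, k}. ?f r c l) = (\<Prod>l\<in>UNIV - {j, k}. ?g r c l)"
      by (rule prod.cong) (auto simp: flip_def cact_parts)
    have loc: "?f r c j * ?f r c k = ?s * (?g r c j * ?g r c k)"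
      using loc2[of "xpart x j" "zpart x j" "r j" "c j" "xpart x k" "zpart x k" "r k" "c k"] assms
      by (simp add: flip_def cact_parts)
    show ?thesis
      by (simp add: prod_split2[OF assms, of "?f r c"] prod_split2[OF assms, of "?g r c"] rest loc mult.assoc)
  qed
  then show "cnot j k ** weyl x ** adjoint_op (cnot j k) = smat ?s (weyl (cact j k x))"
    by (simp add: vec_eq_iff mult_adj_cnot[OF assms] cnot_mult_left[OF assms] weyl_tensor tensor_entry)
qed

abbreviation lin :: "(bit ^ ('n::finite + 'n) \<Rightarrow> bit ^ ('n + 'n)) \<Rightarrow> bool" where
  "lin f \<equiv> Vector_Spaces.linear ((*s) :: bit \<Rightarrow> _) ((*s) :: bit \<Rightarrow> _) f"

lemma vs_bit: "vector_space ((*s) :: bit \<Rightarrow> bit ^ ('n::finite + 'n) \<Rightarrow> _)"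
  by (rule vec.vector_space_axioms)

lemma linI: assumes "\<And>x y. f (x + y) = f x + f y" "\<And>c x. f (c *s x) = c *s f x" shows "lin f"
  unfolding Vector_Spaces.linear_iff using assms vs_bit by blast

lemma hact_lin: "lin (hact j)"
  by (rule linI) (auto simp: hact_def vec_eq_iff split: sum.splits)

lemma sact_lin: "lin (sact j)"
  by (rule linI) (auto simp: sact_def vec_eq_iff algebra_simps split: sum.splits)

lemma cact_lin: "lin (cact j k)"
  by (rule linI) (auto simp: cact_def vec_eq_iff algebra_simps split: sum.splits)

lemma bit_double[simp]: "(a::bit) + a = 0"
  by (cases a) simp_all

lemma hact_inv: "hact j (hact j x) = x"
  by (auto simp: hact_def vec_eq_iff split: sum.splits)
lemma sact_inv: "sact j (sact j x) = x"
  by (auto simp: sact_def vec_eq_iff add.assoc split: sum.splits)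
lemma cact_inv: "j \<noteq> k \<Longrightarrow> cact j k (cact j k x) = x"
  by (auto simp: cact_def vec_eq_iff add.assoc split: sum.splits)


lemma parts_eq: "xpart y = xpart y' \<Longrightarrow> zpart y = zpart y' \<Longrightarrow> y = y'"
proof -
  assume a: "xpart y = xpart y'" "zpart y = zpart y'"
  have b: "((a::bit) = 1) = (b = 1) \<Longrightarrow> a = b" for a b by (cases a; cases b) auto
  have l: "y $ Inl j = y' $ Inl j" for j using fun_cong[OF a(1), of j] by (intro b) (simp add: xpart_def)
  have r: "y $ Inr j = y' $ Inr j" for j using fun_cong[OF a(2), of j] by (intro b) (simp add: zpart_def)
  have "y $ i = y' $ i" for i
    using l r by (cases i) auto
  then show ?thesis by (simp add: vec_eq_iff)
qed

lemma weyl_entry: "weyl y $ r $ c = (\<Prod>l\<in>UNIV. ppauli (xpart y l) (zpart y l) $ r l $ c l)"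
  by (simp add: weyl_tensor tensor_entry)

lemma ppauli_nz: "ppauli a b $ r $ c \<noteq> 0 \<longleftrightarrow> r = (c \<noteq> a)"
  by (simp add: ppauli_entry)

lemma prod_split1: "(\<Prod>l\<in>(UNIV::'a::finite set). f l) = f m * (\<Prod>l\<in>UNIV - {m}. f l)"
  by (simp add: prod.remove)

lemma loc1: "ppauli a b $ (\<not> a) $ True * ppauli a b' $ a $ False = ppauli a b' $ (\<not> a) $ True * ppauli a b $ a $ False
   \<Longrightarrow> b = b'"
  by (cases a; cases b; cases b') (simp_all add: ppauli_entry)

lemma weyl_unique: assumes "weyl y = smat s (weyl y')" "s \<noteq> 0" shows "y = y'"
proof -
  let ?A = "xpart y" and ?B = "zpart y" and ?A' = "xpart y'" and ?B' = "zpart y'"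
  have E: "(\<Prod>l\<in>UNIV. ppauli (?A l) (?B l) $ r l $ c l) = s * (\<Prod>l\<in>UNIV. ppauli (?A' l) (?B' l) $ r l $ c l)" for r c
    using arg_cong[OF assms(1), of "\<lambda>M. M $ r $ c"] by (simp only: smat_entry weyl_entry)
  have "(\<Prod>l\<in>UNIV. ppauli (?A l) (?B l) $ ?A l $ False) \<noteq> 0"
    by (simp add: prod_zero_iff ppauli_nz)
  then have "(\<Prod>l\<in>UNIV. ppauli (?A' l) (?B' l) $ ?A l $ False) \<noteq> 0"
    using E[of ?A "\<lambda>_. False"] by auto
  then have XA: "?A = ?A'"
    by (auto simp: prod_zero_iff ppauli_nz fun_eq_iff)
  have "?B m = ?B' m" for m
  proof -
    define f where "f = (\<lambda>B l cb. ppauli (?A l) (B l) $ (cb \<noteq> ?A l) $ cb)"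
    have fnz: "f B l cb \<noteq> 0" for B l cb by (simp add: f_def ppauli_nz)
    define R where "R = (\<lambda>B. \<Prod>l\<in>UNIV - {m}. f B l False)"
    have Rnz: "R B \<noteq> 0" for B by (simp add: R_def fnz)
    have key: "(\<Prod>l\<in>UNIV. f B l (c l)) = f B m (c m) * R B" if "\<forall>l. l \<noteq> m \<longrightarrow> \<not> c l" for B c
      unfolding R_def using that by (subst prod_split1[of _ m]) (auto intro!: prod.cong)
    have E2: "(\<Prod>l\<in>UNIV. f ?B l (c l)) = s * (\<Prod>l\<in>UNIV. f ?B' l (c l))" for c
      using E[of "\<lambda>l. c l \<noteq> ?A l" c] XA unfolding f_def by simp
    have T: "f ?B m True * R ?B = s * (f ?B' m True * R ?B')"
      using E2[of "\<lambda>l. l = m"] key[of "\<lambda>l. l = m"] by simp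
    have F: "f ?B m False * R ?B = s * (f ?B' m False * R ?B')"
      using E2[of "\<lambda>l. False"] key[of "\<lambda>l. False"] by simp
    have "f ?B m True * f ?B' m False * (s * R ?B * R ?B') = f ?B' m True * f ?B m False * (s * R ?B * R ?B')"
    proof -
      have "f ?B m True * f ?B' m False * (s * R ?B * R ?B') = (f ?B m True * R ?B) * (s * (f ?B' m False * R ?B'))"
        by (simp add: algebra_simps)
      also have "\<dots> = (s * (f ?B' m True * R ?B')) * (f ?B m False * R ?B)" by (simp add: T F)
      also have "\<dots> = f ?B' m True * f ?B m False * (s * R ?B * R ?B')" by (simp add: algebra_simps)
      finally show ?thesis .
    qed
    then have "f ?B m True * f ?B' m False = f ?B' m True * f ?B m False"
      using Rnz assms(2) by simp
    then show ?thesis unfolding f_def by (intro loc1[of "?A m"]) simp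
  qed
  then have "?B = ?B'" by (simp add: fun_eq_iff)
  then show ?thesis by (rule parts_eq[OF XA])
qed

lemma cj_unique: "cj C x y \<Longrightarrow> cj C x y' \<Longrightarrow> y = y'"
proof -
  assume a: "cj C x y" "cj C x y'"
  have "weyl y = smat 1 (weyl y') \<or> weyl y = smat (-1) (weyl y')"
    using a unfolding cj_def smat_m1 smat_one by auto
  then show ?thesis using weyl_unique[of y 1 y'] weyl_unique[of y "-1" y'] by auto
qed

lemma cj_act: "cj C x y \<Longrightarrow> clifford_act C x = y"
  unfolding clifford_act_def
  by (rule the_equality) (auto simp: cj_def[symmetric] intro: cj_unique)

lemma cj_comp: assumes "cj C x y" "cj G y z" shows "cj (G ** C) x z"
proof -
  have eq: "(G ** C) ** weyl x ** adjoint_op (G ** C) = G ** (C ** weyl x ** adjoint_op C) ** adjoint_op G"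
    by (simp add: adjoint_mult matrix_mul_assoc)
  show ?thesis using assms unfolding cj_def eq
    by (auto simp: uminus_mult_left uminus_mult_right)
qed

lemma cj_id: "cj (mat 1) x x"
  by (simp add: cj_def)

definition unitary :: "'n::finite qop \<Rightarrow> bool" where
  "unitary C \<longleftrightarrow> C ** adjoint_op C = mat 1 \<and> adjoint_op C ** C = mat 1"

lemma unitary_mult: "unitary A \<Longrightarrow> unitary B \<Longrightarrow> unitary (A ** B)"
  unfolding unitary_def adjoint_mult
  by (metis matrix_mul_assoc matrix_mul_rid)

lemma unitary_id: "unitary (mat 1)"
  by (simp add: unitary_def)

lemma had_unitary: "unitary (on_qubit j hadamard)"
  by (simp add: unitary_def on_qubit_adj on_qubit_mult had_adj had_unit on_qubit_I)

lemma S_unitary: "unitary (on_qubit j phaseS)"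
  by (simp add: unitary_def on_qubit_adj on_qubit_mult S_unit1 S_unit2 on_qubit_I)

lemma cnot_adj: assumes "j \<noteq> k" shows "adjoint_op (cnot j k) = cnot j k"
proof -
  have "(c = flip j k r) = (r = flip j k c)" for r c using flip_eq_iff[OF assms] by metis
  then show ?thesis by (simp add: vec_eq_iff cnot_entry)
qed

lemma cnot_sq: assumes "j \<noteq> k" shows "cnot j k ** cnot j k = mat 1"
proof -
  have "(flip j k r = flip j k c) = (r = c)" for r c using flip_flip[OF assms] by metis
  then show ?thesis by (simp add: vec_eq_iff cnot_mult_left[OF assms] cnot_entry mat_def)
qed

lemma cnot_unitary: "j \<noteq> k \<Longrightarrow> unitary (cnot j k)"
  by (simp add: unitary_def cnot_adj cnot_sq)

lemma circ_unitary: "C \<in> clifford_circuits \<Longrightarrow> unitary C"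
  by (induction rule: clifford_circuits.induct)
     (auto intro: unitary_mult unitary_id had_unitary S_unitary cnot_unitary)

lemma circ_mult: "A \<in> clifford_circuits \<Longrightarrow> B \<in> clifford_circuits \<Longrightarrow> A ** B \<in> clifford_circuits"
  by (induction rule: clifford_circuits.induct)
     (auto simp flip: matrix_mul_assoc intro: clifford_circuits.intros)

lemma had_circ: "on_qubit j hadamard \<in> clifford_circuits"
  using clifford_circuits.H_gate[OF clifford_circuits.id_circ] by simp
lemma S_circ: "on_qubit j phaseS \<in> clifford_circuits"
  using clifford_circuits.S_gate[OF clifford_circuits.id_circ] by simp
lemma cnot_circ: "j \<noteq> k \<Longrightarrow> cnot j k \<in> clifford_circuits"
  using clifford_circuits.CNOT_gate[OF clifford_circuits.id_circ] by simp

lemma circ_adj: "C \<in> clifford_circuits \<Longrightarrow> adjoint_op C \<in> clifford_circuits"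
proof (induction rule: clifford_circuits.induct)
  case id_circ then show ?case by (simp add: clifford_circuits.id_circ)
next
  case (H_gate C j)
  then show ?case by (simp add: adjoint_mult on_qubit_adj had_adj circ_mult had_circ)
next
  case (S_gate C j)
  have "adjoint_op (on_qubit j phaseS) = on_qubit j phaseS ** on_qubit j phaseS ** on_qubit j phaseS"
    by (simp add: on_qubit_adj S_adj on_qubit_mult)
  then show ?case using S_gate by (simp add: adjoint_mult circ_mult S_circ)
next
  case (CNOT_gate C j k)
  then show ?case by (simp add: adjoint_mult cnot_adj circ_mult cnot_circ)
qed

lemma inv_inj: "(\<And>x. f (f x) = x) \<Longrightarrow> inj f"
  by (metis injI)

lemma circ_act: "C \<in> clifford_circuits \<Longrightarrow>
   (\<forall>x. cj C x (clifford_act C x)) \<and> lin (clifford_act C) \<and> inj (clifford_act C)"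
proof (induction rule: clifford_circuits.induct)
  case id_circ
  have e: "clifford_act (mat 1) = id" by (rule ext) (simp add: cj_act[OF cj_id])
  have "lin (id :: bit ^ ('a + 'a) \<Rightarrow> _)" by (rule vec.linear_id)
  then show ?case unfolding e by (simp add: cj_id id_def)
next
  case (H_gate C j)
  have cjx: "cj (on_qubit j hadamard ** C) x (hact j (clifford_act C x))" for x
    using H_gate cj_comp had_cj by blast
  then have e: "clifford_act (on_qubit j hadamard ** C) = hact j \<circ> clifford_act C"
    using cj_act by (auto simp: fun_eq_iff)
  have "lin (hact j \<circ> clifford_act C)"
    by (rule Vector_Spaces.linear_compose[OF _ hact_lin]) (use H_gate in simp)
  moreover have "inj (hact j \<circ> clifford_act C)"
    by (rule inj_compose[OF inv_inj[OF hact_inv]]) (use H_gate in simp)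
  ultimately show ?case unfolding e using cjx by (simp add: comp_def)
next
  case (S_gate C j)
  have cjx: "cj (on_qubit j phaseS ** C) x (sact j (clifford_act C x))" for x
    using S_gate cj_comp S_cj by blast
  then have e: "clifford_act (on_qubit j phaseS ** C) = sact j \<circ> clifford_act C"
    using cj_act by (auto simp: fun_eq_iff)
  have "lin (sact j \<circ> clifford_act C)"
    by (rule Vector_Spaces.linear_compose[OF _ sact_lin]) (use S_gate in simp)
  moreover have "inj (sact j \<circ> clifford_act C)"
    by (rule inj_compose[OF inv_inj[OF sact_inv]]) (use S_gate in simp)
  ultimately show ?case unfolding e using cjx by (simp add: comp_def)
next
  case (CNOT_gate C j k)
  have cjx: "cj (cnot j k ** C) x (cact j k (clifford_act C x))" for x
    using CNOT_gate cj_comp cnot_cj by blast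
  then have e: "clifford_act (cnot j k ** C) = cact j k \<circ> clifford_act C"
    using cj_act by (auto simp: fun_eq_iff)
  have "lin (cact j k \<circ> clifford_act C)"
    by (rule Vector_Spaces.linear_compose[OF _ cact_lin]) (use CNOT_gate in simp)
  moreover have "inj (cact j k \<circ> clifford_act C)"
    by (rule inj_compose[OF inv_inj[OF cact_inv[OF CNOT_gate(2)]]]) (use CNOT_gate in simp)
  ultimately show ?case unfolding e using cjx by (simp add: comp_def)
qed

lemma smat_mv: "smat k M *v v = k *s (M *v v)"
  by (simp add: vec_eq_iff matrix_vector_mult_def sum_distrib_left mult.assoc)

lemma mv_scale: "M *v (k *s v) = k *s (M *v v)" for M :: "complex^'a^'a"
  by (simp add: vec_eq_iff matrix_vector_mult_def sum_distrib_left algebra_simps)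

lemma mv_uminus: "M *v (- v) = - (M *v v)" for M :: "complex^'a^'a"
  by (simp add: vec_eq_iff matrix_vector_mult_def sum_negf)

lemma weyl_set_iff: "x \<in> Weyl_set \<psi> \<longleftrightarrow> (\<exists>d. (d = 1 \<or> d = -1) \<and> weyl x *v \<psi> = d *s \<psi>)"
  unfolding Weyl_set_def by (auto simp: vec_eq_iff)

lemma cj_smat_iff: "cj C x y \<longleftrightarrow> (\<exists>e. (e = 1 \<or> e = -1) \<and> C ** weyl x ** adjoint_op C = smat e (weyl y))"
  unfolding cj_def by (auto simp: smat_m1)

lemma transport:
  assumes U: "unitary C" and cj: "cj C x y" and st: "C *v \<psi> = w *s \<phi>" and w: "w \<noteq> 0"
  shows "x \<in> Weyl_set \<psi> \<longleftrightarrow> y \<in> Weyl_set \<phi>"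
proof -
  obtain e where e: "e = 1 \<or> e = -1" "C ** weyl x ** adjoint_op C = smat e (weyl y)"
    using cj cj_smat_iff by blast
  have ee: "e * e = 1" using e(1) by auto
  have U1: "C ** adjoint_op C = mat 1" and U2: "adjoint_op C ** C = mat 1" using U unitary_def by auto
  have Cpsi: "adjoint_op C *v \<phi> = inverse w *s \<psi>"
  proof -
    have "\<psi> = adjoint_op C *v (C *v \<psi>)" by (simp add: matrix_vector_mul_assoc U2)
    also have "\<dots> = w *s (adjoint_op C *v \<phi>)" by (simp add: st mv_scale)
    finally show ?thesis using w by (simp add: vector_smult_assoc)
  qed
  have V: "weyl y = smat e (C ** weyl x ** adjoint_op C)"
    using e(2) ee by (simp add: smat_smat)
  have W: "weyl x = smat e (adjoint_op C ** weyl y ** C)"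
  proof -
    have "adjoint_op C ** (C ** weyl x ** adjoint_op C) ** C = weyl x"
      by (simp add: matrix_mul_assoc U2) (simp flip: matrix_mul_assoc add: U2)
    then show ?thesis using e(2) ee by (simp add: smat_mult_left smat_mult_right smat_smat)
  qed
  show ?thesis
  proof
    assume "x \<in> Weyl_set \<psi>"
    then obtain d where d: "d = 1 \<or> d = -1" "weyl x *v \<psi> = d *s \<psi>" using weyl_set_iff by blast
    have "weyl y *v \<phi> = e *s (C *v (weyl x *v (adjoint_op C *v \<phi>)))"
      by (simp add: V smat_mv flip: matrix_vector_mul_assoc)
    also have "\<dots> = (e * d) *s \<phi>"
      using w by (simp add: Cpsi mv_scale d(2) st vector_smult_assoc mult.commute mult.left_commute)
    finally show "y \<in> Weyl_set \<phi>" unfolding weyl_set_iff using d(1) e(1) by (intro exI[of _ "e * d"]) auto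
  next
    assume "y \<in> Weyl_set \<phi>"
    then obtain d where d: "d = 1 \<or> d = -1" "weyl y *v \<phi> = d *s \<phi>" using weyl_set_iff by blast
    have "weyl x *v \<psi> = e *s (adjoint_op C *v (weyl y *v (C *v \<psi>)))"
      by (simp add: W smat_mv flip: matrix_vector_mul_assoc)
    also have "\<dots> = (e * d) *s \<psi>"
      using w by (simp add: Cpsi mv_scale d(2) st vector_smult_assoc mult.commute mult.left_commute)
    finally show "x \<in> Weyl_set \<psi>" unfolding weyl_set_iff using d(1) e(1) by (intro exI[of _ "e * d"]) auto
  qed
qed


lemma cj_adj: assumes U: "unitary C" and c: "cj (adjoint_op C) y x" shows "cj C x y"
proof -
  obtain e where e: "e = 1 \<or> e = -1" "adjoint_op C ** weyl y ** C = smat e (weyl x)"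
    using c cj_smat_iff by (metis adjoint_adjoint)
  have ee: "e * e = 1" using e(1) by auto
  have U1: "C ** adjoint_op C = mat 1" and U2: "adjoint_op C ** C = mat 1" using U unitary_def by auto
  have "C ** (adjoint_op C ** weyl y ** C) ** adjoint_op C = weyl y"
    by (simp add: matrix_mul_assoc U1) (simp flip: matrix_mul_assoc add: U1)
  then have h: "smat e (C ** weyl x ** adjoint_op C) = weyl y"
    using e(2) by (simp add: smat_mult_left smat_mult_right)
  have "C ** weyl x ** adjoint_op C = smat e (smat e (C ** weyl x ** adjoint_op C))"
    using ee by (simp add: smat_smat)
  then have "C ** weyl x ** adjoint_op C = smat e (weyl y)" using h by simp
  then show ?thesis using e(1) cj_smat_iff by blast
qed

lemma image_weyl:
  assumes C: "C \<in> clifford_circuits" and st: "C *v \<psi> = w *s \<phi>" and w: "w \<noteq> 0"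
  shows "clifford_act C ` Weyl_set \<psi> = Weyl_set \<phi>"
proof
  have U: "unitary C" using circ_unitary[OF C] .
  have A: "\<forall>x. cj C x (clifford_act C x)" using circ_act[OF C] by blast
  show "clifford_act C ` Weyl_set \<psi> \<subseteq> Weyl_set \<phi>"
    using transport[OF U _ st w] A by blast
  show "Weyl_set \<phi> \<subseteq> clifford_act C ` Weyl_set \<psi>"
  proof
    fix y assume y: "y \<in> Weyl_set \<phi>"
    have D: "adjoint_op C \<in> clifford_circuits" using circ_adj[OF C] .
    define x where "x = clifford_act (adjoint_op C) y"
    have "cj (adjoint_op C) y x" using circ_act[OF D] x_def by blast
    then have cx: "cj C x y" using cj_adj[OF U] by blast
    then have "clifford_act C x = y" by (rule cj_act)
    moreover have "x \<in> Weyl_set \<psi>" using transport[OF U cx st w] y by blast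
    ultimately show "y \<in> clifford_act C ` Weyl_set \<psi>" by blast
  qed
qed

lemma ppauli_F: "ppauli a b $ r $ False = (if a \<and> b then \<i> else 1) * (if r = a then 1 else 0)"
  by (simp add: ppauli_entry)

lemma weyl_ket0: "(weyl x *v ket0) $ r = (\<Prod>l\<in>UNIV. ppauli (xpart x l) (zpart x l) $ r l $ False)"
proof -
  have "(weyl x *v ket0) $ r = (\<Sum>c\<in>UNIV. if c = (\<lambda>_. False) then weyl x $ r $ c else 0)"
    unfolding matrix_vector_mult_def ket0_def by (simp only: vec_lambda_beta) (rule sum.cong, auto)
  then show ?thesis by (simp add: weyl_entry)
qed

lemma Weyl_ket0: "Weyl_set (ket0::'n::finite qstate) = {x. \<forall>j. x $ Inl j = 0}"
proof (intro set_eqI iffI)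
  fix x :: "bit ^ ('n + 'n)"
  assume "x \<in> Weyl_set ket0"
  then obtain d where d: "d = 1 \<or> d = -1" "weyl x *v ket0 = d *s ket0" using weyl_set_iff by blast
  have "(weyl x *v ket0) $ xpart x \<noteq> 0"
    unfolding weyl_ket0 by (simp add: prod_zero_iff ppauli_F)
  then have "xpart x = (\<lambda>_. False)" using d by (auto simp: ket0_def split: if_splits)
  then show "x \<in> {x. \<forall>j. x $ Inl j = 0}" by (auto simp: xpart_def fun_eq_iff)
next
  fix x :: "bit ^ ('n + 'n)"
  assume "x \<in> {x. \<forall>j. x $ Inl j = 0}"
  then have xp: "\<not> xpart x l" for l by (simp add: xpart_def)
  have "weyl x *v ket0 = ket0"
  unfolding vec_eq_iff proof (intro allI)
    fix r :: "'n \<Rightarrow> bool"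
    show "(weyl x *v ket0) $ r = ket0 $ r"
    proof (cases "r = (\<lambda>_. False)")
      case True then show ?thesis unfolding weyl_ket0 by (simp add: ppauli_F xp ket0_def)
    next
      case False
      then obtain l where "r l" by auto
      then show ?thesis unfolding weyl_ket0 using False
        by (simp add: ppauli_F xp ket0_def prod_zero_iff) (metis xp)
    qed
  qed
  then show "x \<in> Weyl_set ket0" by (simp add: Weyl_set_def)
qed

definition Zs :: "(bit ^ ('n::finite + 'n)) set" where "Zs = {x. \<forall>j. x $ Inl j = 0}"
definition ez :: "'n \<Rightarrow> bit ^ ('n::finite + 'n)" where "ez k = (\<chi> i. if i = Inr k then 1 else 0)"
definition ind :: "'n set \<Rightarrow> bit ^ ('n::finite + 'n)" where "ind S = (\<chi> i. if (\<exists>j\<in>S. i = Inr j) then 1 else 0)"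

inductive_set cnc :: "'n::finite qop set" where
  cnc_id: "mat 1 \<in> cnc"
| cnc_step: "D \<in> cnc \<Longrightarrow> j \<noteq> k \<Longrightarrow> cnot j k ** D \<in> cnc"

lemma cnc_circ: "D \<in> cnc \<Longrightarrow> D \<in> clifford_circuits"
  by (induction rule: cnc.induct) (auto intro: clifford_circuits.intros)

lemma cnc_mult: "A \<in> cnc \<Longrightarrow> B \<in> cnc \<Longrightarrow> A ** B \<in> cnc"
  by (induction rule: cnc.induct) (auto simp flip: matrix_mul_assoc intro: cnc.intros)

lemma cnot_mv: assumes "j \<noteq> k" shows "(cnot j k *v v) $ r = v $ (flip j k r)"
proof -
  have "(cnot j k *v v) $ r = (\<Sum>p\<in>UNIV. if p = flip j k r then v $ p else 0)"
    unfolding matrix_vector_mult_def using assms by (simp only: vec_lambda_beta) (rule sum.cong, auto simp: cnot_entry flip_eq_iff)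
  then show ?thesis by simp
qed

lemma cnot_ket0: assumes "j \<noteq> k" shows "cnot j k *v ket0 = ket0"
proof -
  have f0: "flip j k (\<lambda>_. False) = (\<lambda>_. False)" by (simp add: flip_def fun_eq_iff)
  have "(flip j k r = (\<lambda>_. False)) = (r = (\<lambda>_. False))" for r
    using flip_eq_iff[OF assms, of "\<lambda>_. False" r] f0 by metis
  then show ?thesis by (simp add: vec_eq_iff cnot_mv[OF assms] ket0_def)
qed

lemma cnc_ket0: "D \<in> cnc \<Longrightarrow> D *v ket0 = ket0"
  by (induction rule: cnc.induct) (auto simp flip: matrix_vector_mul_assoc simp: cnot_ket0)

lemma act_comp: assumes "A \<in> clifford_circuits" "B \<in> clifford_circuits"
  shows "clifford_act (A ** B) = clifford_act A \<circ> clifford_act B"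
proof (rule ext)
  fix x
  have "cj B x (clifford_act B x)" using circ_act[OF assms(2)] by blast
  moreover have "cj A (clifford_act B x) (clifford_act A (clifford_act B x))" using circ_act[OF assms(1)] by blast
  ultimately have "cj (A ** B) x (clifford_act A (clifford_act B x))" by (rule cj_comp)
  then show "clifford_act (A ** B) x = (clifford_act A \<circ> clifford_act B) x" using cj_act by simp
qed

lemma act_id: "clifford_act (mat 1) = id"
  by (rule ext) (simp add: cj_act[OF cj_id])

lemma act_cnot: "j \<noteq> k \<Longrightarrow> clifford_act (cnot j k) = cact j k"
  by (rule ext) (simp add: cj_act[OF cnot_cj])

lemma cact_Z: "w \<in> Zs \<Longrightarrow> cact j k w = w + (w $ Inr k) *s ez j"
  by (auto simp: vec_eq_iff cact_def Zs_def ez_def split: sum.splits)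

lemma cact_Zs: "w \<in> Zs \<Longrightarrow> cact j k w \<in> Zs"
  by (auto simp: cact_def Zs_def)

lemma act_cnc_Zs: "D \<in> cnc \<Longrightarrow> x \<in> Zs \<Longrightarrow> clifford_act D x \<in> Zs"
proof (induction arbitrary: x rule: cnc.induct)
  case cnc_id then show ?case by (simp add: act_id)
next
  case (cnc_step D j k)
  then show ?case
    by (simp add: act_comp cnot_circ cnc_circ act_cnot cact_Zs)
qed

lemma act_cnc_step: "D \<in> cnc \<Longrightarrow> j \<noteq> k \<Longrightarrow> clifford_act (cnot j k ** D) x = cact j k (clifford_act D x)"
  by (simp add: act_comp cnot_circ cnc_circ act_cnot)

lemma ind_Zs: "a *s ind S \<in> Zs" "a *s ez m \<in> Zs"
  by (auto simp: Zs_def ind_def ez_def)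

lemma Zs_add: "x \<in> Zs \<Longrightarrow> y \<in> Zs \<Longrightarrow> x + y \<in> Zs"
  by (auto simp: Zs_def)

lemma clear: "finite S \<Longrightarrow> m \<notin> S \<Longrightarrow> \<exists>D\<in>cnc. \<forall>w\<in>Zs. clifford_act D w = w + (w $ Inr m) *s ind S"
proof (induction rule: finite_induct)
  case empty
  have "ind {} = (0 :: bit ^ ('a + 'a))" by (simp add: ind_def vec_eq_iff)
  then show ?case using cnc_id by (intro bexI[of _ "mat 1"]) (auto simp: act_id)
next
  case (insert j S)
  then obtain D where D: "D \<in> cnc" "\<forall>w\<in>Zs. clifford_act D w = w + (w $ Inr m) *s ind S" by auto
  have jm: "j \<noteq> m" using insert by auto
  have "\<forall>w\<in>Zs. clifford_act (cnot j m ** D) w = w + (w $ Inr m) *s ind (insert j S)"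
  proof
    fix w :: "bit ^ ('a + 'a)" assume w: "w \<in> Zs"
    let ?u = "w + (w $ Inr m) *s ind S"
    have uZ: "?u \<in> Zs" using w by (intro Zs_add ind_Zs)
    have um: "?u $ Inr m = w $ Inr m" using insert by (simp add: ind_def)
    have "clifford_act (cnot j m ** D) w = cact j m ?u" using D jm w by (simp add: act_cnc_step)
    also have "\<dots> = ?u + (w $ Inr m) *s ez j" using cact_Z[OF uZ] um by simp
    also have "\<dots> = w + (w $ Inr m) *s ind (insert j S)"
      using insert by (auto simp: vec_eq_iff ind_def ez_def algebra_simps)
    finally show "clifford_act (cnot j m ** D) w = w + (w $ Inr m) *s ind (insert j S)" .
  qed
  then show ?case using cnc_step[OF D(1) jm] by blast
qed


lemma bit_cases2: "(a::bit) \<noteq> 1 \<Longrightarrow> a = 0" by simp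

lemma clear1: assumes v: "v \<in> Zs" "v $ Inr m = 1"
  shows "\<exists>D\<in>cnc. clifford_act D v = ez m \<and> (\<forall>w\<in>Zs. w $ Inr m = 0 \<longrightarrow> clifford_act D w = w)"
proof -
  let ?S = "{j. j \<noteq> m \<and> v $ Inr j = 1}"
  obtain D where D: "D \<in> cnc" "\<forall>w\<in>Zs. clifford_act D w = w + (w $ Inr m) *s ind ?S"
    using clear[of ?S m] by auto
  have "v + 1 *s ind ?S = ez m"
    using v unfolding vec_eq_iff
  proof (intro allI)
    fix i :: "'a + 'a"
    show "(v + 1 *s ind ?S) $ i = ez m $ i"
      using v by (cases i) (auto simp: Zs_def ind_def ez_def)
  qed
  then have "clifford_act D v = ez m" using D v by simp
  moreover have "\<forall>w\<in>Zs. w $ Inr m = 0 \<longrightarrow> clifford_act D w = w" using D by simp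
  ultimately show ?thesis using D(1) by blast
qed

lemma step: assumes v: "v \<in> Zs" "m \<notin> K" "l \<notin> K" "v $ Inr l = 1"
  shows "\<exists>D\<in>cnc. clifford_act D v = ez m \<and> (\<forall>w\<in>Zs. (\<forall>i. i \<notin> K \<longrightarrow> w $ Inr i = 0) \<longrightarrow> clifford_act D w = w)"
proof (cases "v $ Inr m = 1")
  case True
  then obtain D where "D \<in> cnc" "clifford_act D v = ez m" "\<forall>w\<in>Zs. w $ Inr m = 0 \<longrightarrow> clifford_act D w = w"
    using clear1[OF v(1)] by blast
  then show ?thesis using v(2) by blast
next
  case False
  then have vm: "v $ Inr m = 0" by simp
  then have lm: "l \<noteq> m" using v(4) by auto
  have D1: "cnot m l \<in> cnc" using cnc_step[OF cnc_id, of m l] lm by simp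
  have a1: "clifford_act (cnot m l) = cact m l" using lm by (simp add: act_cnot)
  let ?v = "cact m l v"
  have v': "?v \<in> Zs" "?v $ Inr m = 1" using v vm lm by (auto simp: cact_Zs, simp add: cact_def)
  obtain D2 where D2: "D2 \<in> cnc" "clifford_act D2 ?v = ez m" "\<forall>w\<in>Zs. w $ Inr m = 0 \<longrightarrow> clifford_act D2 w = w"
    using clear1[OF v'] by blast
  have e: "clifford_act (D2 ** (cnot m l)) = clifford_act D2 \<circ> cact m l"
    using act_comp[OF cnc_circ[OF D2(1)] cnc_circ[OF D1]] a1 by simp
  have "clifford_act (D2 ** (cnot m l)) v = ez m" using e D2 by simp
  moreover have "\<forall>w\<in>Zs. (\<forall>i. i \<notin> K \<longrightarrow> w $ Inr i = 0) \<longrightarrow> clifford_act (D2 ** (cnot m l)) w = w"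
  proof (intro ballI impI)
    fix w :: "bit ^ ('a + 'a)" assume w: "w \<in> Zs" "\<forall>i. i \<notin> K \<longrightarrow> w $ Inr i = 0"
    have "cact m l w = w" using cact_Z[OF w(1)] w(2) v(3) by simp
    then show "clifford_act (D2 ** (cnot m l)) w = w" using e D2(3) w v(2) by simp
  qed
  ultimately show ?thesis using cnc_mult[OF D2(1) D1] by blast
qed

lemma cnc_lin: "D \<in> cnc \<Longrightarrow> lin (clifford_act D)"
  using circ_act[OF cnc_circ] by blast
lemma cnc_inj: "D \<in> cnc \<Longrightarrow> inj (clifford_act D)"
  using circ_act[OF cnc_circ] by blast

lemma ez_sum: assumes "v \<in> Zs" "\<forall>l. l \<notin> K \<longrightarrow> v $ Inr l = 0" "finite K"
  shows "v = (\<Sum>k\<in>K. (v $ Inr k) *s ez k)"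
  unfolding vec_eq_iff
proof
  fix i :: "'a + 'a"
  show "v $ i = (\<Sum>k\<in>K. (v $ Inr k) *s ez k) $ i"
  proof (cases i)
    case (Inl a) then show ?thesis using assms(1) by (simp add: Zs_def ez_def)
  next
    case (Inr l)
    have "(\<Sum>k\<in>K. (v $ Inr k) *s ez k) $ i = (\<Sum>k\<in>K. if l = k then v $ Inr k else 0)"
      using Inr by (simp add: ez_def if_distrib cong: if_cong)
    also have "\<dots> = v $ i" using Inr assms(2,3) by (simp add: sum.delta)
    finally show ?thesis by simp
  qed
qed

lemma elim:
  fixes f :: "bit ^ ('n::finite + 'n) \<Rightarrow> bit ^ ('n + 'n)" and J :: "'n set"
  assumes lf: "lin f" and fi: "inj_on f (vec.span (ez ` J))" and fZ: "f ` vec.span (ez ` J) \<subseteq> Zs"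
  shows "\<exists>D\<in>cnc. \<forall>k\<in>J. clifford_act D (f (ez k)) = ez k"
proof -
  have "finite J" by simp
  have "\<exists>D\<in>cnc. \<forall>k\<in>K. clifford_act D (f (ez k)) = ez k" if "K \<subseteq> J" for K
  proof -
    have "finite K" by simp
    then show ?thesis using that
    proof (induction rule: finite_subset_induct')
      case empty then show ?case using cnc_id by blast
    next
      case (insert m K)
      then obtain D where D: "D \<in> cnc" "\<forall>k\<in>K. clifford_act D (f (ez k)) = ez k" by blast
      let ?g = "clifford_act D \<circ> f"
      let ?v = "clifford_act D (f (ez m))"
      have emV: "ez m \<in> vec.span (ez ` J)" using insert by (intro vec.span_base) auto
      have vZ: "?v \<in> Zs" using fZ emV act_cnc_Zs[OF D(1)] by blast
      have lg: "lin ?g" by (rule Vector_Spaces.linear_compose[OF lf cnc_lin[OF D(1)]])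
      have ig: "inj_on ?g (vec.span (ez ` J))"
        using comp_inj_on[OF fi] cnc_inj[OF D(1)] by (metis inj_on_subset subset_UNIV)
      have "\<exists>l. l \<notin> K \<and> ?v $ Inr l = 1"
      proof (rule ccontr)
        assume "\<not> (\<exists>l. l \<notin> K \<and> ?v $ Inr l = 1)"
        then have z: "\<forall>l. l \<notin> K \<longrightarrow> ?v $ Inr l = 0" by auto
        have vs: "?v = (\<Sum>k\<in>K. (?v $ Inr k) *s ez k)" using ez_sum[OF vZ z] insert by simp
        have vspan: "?v \<in> vec.span (ez ` K)"
          by (subst vs, intro vec.span_sum vec.span_scale vec.span_base) auto
        have "?g ?v = id ?v"
          by (rule vec.linear_eq_on[OF lg vec.linear_id vspan]) (use D in auto)
        then have "?g ?v = ?g (ez m)" by simp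
        moreover have "?v \<in> vec.span (ez ` J)"
          using vspan vec.span_mono[of "ez ` K" "ez ` J"] insert by blast
        ultimately have "?v = ez m" using ig emV by (meson inj_onD)
        then have "?v $ Inr m = 1" by (simp add: ez_def)
        then show False using z insert by auto
      qed
      then obtain l where l: "l \<notin> K" "?v $ Inr l = 1" by blast
      obtain D' where D': "D' \<in> cnc" "clifford_act D' ?v = ez m"
        "\<forall>w\<in>Zs. (\<forall>i. i \<notin> K \<longrightarrow> w $ Inr i = 0) \<longrightarrow> clifford_act D' w = w"
        using step[OF vZ _ l] insert by blast
      have e: "clifford_act (D' ** D) = clifford_act D' \<circ> clifford_act D"
        by (rule act_comp[OF cnc_circ[OF D'(1)] cnc_circ[OF D(1)]])
      have "\<forall>k\<in>insert m K. clifford_act (D' ** D) (f (ez k)) = ez k"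
      proof
        fix k assume k: "k \<in> insert m K"
        show "clifford_act (D' ** D) (f (ez k)) = ez k"
        proof (cases "k = m")
          case True then show ?thesis using e D' by simp
        next
          case False
          then have kK: "k \<in> K" using k by simp
          have "ez k \<in> Zs" "\<forall>i. i \<notin> K \<longrightarrow> ez k $ Inr i = 0" using kK by (auto simp: Zs_def ez_def)
          then show ?thesis using e D D' kK by simp
        qed
      qed
      then show ?case using cnc_mult[OF D'(1) D(1)] by blast
    qed
  qed
  then show ?thesis by blast
qed

lemma elim_image:
  fixes f :: "bit ^ ('n::finite + 'n) \<Rightarrow> bit ^ ('n + 'n)" and J :: "'n set"
  assumes lf: "lin f" and fi: "inj_on f (vec.span (ez ` J))" and fZ: "f ` vec.span (ez ` J) \<subseteq> Zs"
  shows "\<exists>D\<in>cnc. clifford_act D ` f ` vec.span (ez ` J) = vec.span (ez ` J)"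
proof -
  obtain D where D: "D \<in> cnc" "\<forall>k\<in>J. clifford_act D (f (ez k)) = ez k" using elim[OF assms] by blast
  have lg: "lin (clifford_act D \<circ> f)" by (rule Vector_Spaces.linear_compose[OF lf cnc_lin[OF D(1)]])
  have "(clifford_act D \<circ> f) x = id x" if "x \<in> vec.span (ez ` J)" for x
    by (rule vec.linear_eq_on[OF lg vec.linear_id that]) (use D in auto)
  then have "clifford_act D ` f ` vec.span (ez ` J) = vec.span (ez ` J)"
    by (force simp: image_image)
  then show ?thesis using D(1) by blast
qed

lemma qpos_mono: "j < j' \<Longrightarrow> qpos j < qpos (j'::'n::{finite,linorder})"
  unfolding qpos_def by (rule psubset_card_mono) auto

lemma qpos_inj: "inj (qpos :: 'n::{finite,linorder} \<Rightarrow> nat)"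
  by (metis injI linorder_neqE qpos_mono less_irrefl)

lemma qpos_lt: "qpos (j::'n::{finite,linorder}) < CARD('n)"
  unfolding qpos_def by (rule psubset_card_mono) auto

lemma qpos_range: "range (qpos :: 'n::{finite,linorder} \<Rightarrow> nat) = {..<CARD('n)}"
proof -
  have "range (qpos :: 'n \<Rightarrow> nat) \<subseteq> {..<CARD('n)}" using qpos_lt by auto
  moreover have "card (range (qpos :: 'n \<Rightarrow> nat)) = card {..<CARD('n)}"
    using card_image[OF qpos_inj] by simp
  ultimately show ?thesis by (intro card_subset_eq) auto
qed

lemma card_J: "card {j::'n::{finite,linorder}. \<not> qpos j < t} = CARD('n) - t"
proof -
  have "qpos ` {j::'n. \<not> qpos j < t} = {t..<CARD('n)}"
  proof
    show "qpos ` {j::'n. \<not> qpos j < t} \<subseteq> {t..<CARD('n)}" using qpos_lt by auto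
    show "{t..<CARD('n)} \<subseteq> qpos ` {j::'n. \<not> qpos j < t}"
    proof
      fix i assume i: "i \<in> {t..<CARD('n)}"
      then have "i \<in> range (qpos :: 'n \<Rightarrow> nat)" using qpos_range by auto
      then obtain j :: 'n where "i = qpos j" by auto
      then show "i \<in> qpos ` {j::'n. \<not> qpos j < t}" using i by auto
    qed
  qed
  moreover have "card (qpos ` {j::'n. \<not> qpos j < t}) = card {j::'n. \<not> qpos j < t}"
    by (rule card_image) (meson inj_on_subset qpos_inj subset_UNIV)
  ultimately show ?thesis by simp
qed

lemma target_span: "{x. (\<forall>j. x $ Inl j = 0) \<and> (\<forall>j. qpos j < t \<longrightarrow> x $ Inr j = 0)}
   = vec.span (ez ` {j::'n::{finite,linorder}. \<not> qpos j < t})" (is "?T = vec.span (ez ` ?J)")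
proof
  show "?T \<subseteq> vec.span (ez ` ?J)"
  proof
    fix x assume x: "x \<in> ?T"
    then have "x \<in> Zs" "\<forall>l. l \<notin> ?J \<longrightarrow> x $ Inr l = 0" by (auto simp: Zs_def)
    then have "x = (\<Sum>k\<in>?J. (x $ Inr k) *s ez k)" by (intro ez_sum) simp_all
    also have "\<dots> \<in> vec.span (ez ` ?J)"
      by (intro vec.span_sum vec.span_scale vec.span_base) auto
    finally show "x \<in> vec.span (ez ` ?J)" .
  qed
  have "vec.subspace ?T" unfolding vec.subspace_def by auto
  moreover have "ez ` ?J \<subseteq> ?T" by (auto simp: ez_def)
  ultimately show "vec.span (ez ` ?J) \<subseteq> ?T" by (rule vec.span_minimal[rotated])
qed

lemma ez_indep: "vec.independent (ez ` J)"
proof (rule vec.independent_mono[OF independent_cart_basis])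
  show "ez ` J \<subseteq> cart_basis"
    by (auto simp: cart_basis_def ez_def axis_def)
qed

lemma dim_target: "vec.dim (vec.span (ez ` {j::'n::{finite,linorder}. \<not> qpos j < t})) = CARD('n) - t"
proof -
  have "inj (ez :: 'n \<Rightarrow> bit ^ ('n + 'n))"
  proof (rule injI)
    fix a b :: 'n assume "ez a = ez b"
    then have "ez a $ Inr a = ez b $ Inr a" by simp
    then show "a = b" by (simp add: ez_def split: if_splits)
  qed
  then have "card (ez ` {j::'n. \<not> qpos j < t}) = card {j::'n. \<not> qpos j < t}"
    by (meson card_image inj_on_subset subset_UNIV)
  moreover have "card {j::'n. \<not> qpos j < t} = CARD('n) - t" by (rule card_J)
  ultimately show ?thesis using vec.dim_span_eq_card_independent[OF ez_indep[of "{j::'n. \<not> qpos j < t}"]] by simp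
qed

theorem lemma5p1:
  fixes \<psi> :: "'n::{finite,linorder} qstate"
    and T :: "(bit ^ ('n + 'n)) set"
    and t :: nat
  assumes "stabilizer_state \<psi>"
    and "t \<le> CARD('n)"
    and "vec.subspace T"
    and "T \<subseteq> Weyl_set \<psi>"
    and "vec.dim T = CARD('n) - t"
  shows "\<exists>C\<in>clifford_circuits.
           eq_up_to_phase (C *v \<psi>) ket0 \<and>
           clifford_act C ` Weyl_set \<psi> = {x. \<forall>j. x $ Inl j = 0} \<and>
           clifford_act C ` T = {x. (\<forall>j. x $ Inl j = 0) \<and> (\<forall>j. qpos j < t \<longrightarrow> x $ Inr j = 0)}"
proof -
  obtain C0 w where C0: "C0 \<in> clifford_circuits" and w: "cmod w = 1" and psi: "\<psi> = w *s (C0 *v ket0)"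
    using assms(1) unfolding stabilizer_state_def eq_up_to_phase_def by blast
  have w0: "w \<noteq> 0" using w by auto
  define C1 where "C1 = adjoint_op C0"
  have C1: "C1 \<in> clifford_circuits" unfolding C1_def by (rule circ_adj[OF C0])
  have "adjoint_op C0 ** C0 = mat 1" using circ_unitary[OF C0] unitary_def by blast
  then have C1psi: "C1 *v \<psi> = w *s ket0"
    unfolding psi C1_def by (simp add: mv_scale matrix_vector_mul_assoc)
  have W1: "clifford_act C1 ` Weyl_set \<psi> = Zs"
    using image_weyl[OF C1 C1psi w0] Weyl_ket0 Zs_def by metis
  have l1: "lin (clifford_act C1)" and i1: "inj (clifford_act C1)" using circ_act[OF C1] by auto
  define U where "U = clifford_act C1 ` T"
  have Usub: "vec.subspace U" unfolding U_def by (rule vec.linear_subspace_image[OF l1 assms(3)])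
  have Udim: "vec.dim U = CARD('n) - t"
    unfolding U_def using vec.dim_image_eq[OF l1, of T] i1 assms(5) by (metis inj_on_subset subset_UNIV)
  have UZ: "U \<subseteq> Zs" unfolding U_def using W1 assms(4) by blast
  define J where "J = {j::'n. \<not> qpos j < t}"
  define Vt where "Vt = vec.span (ez ` J)"
  have Vsub: "vec.subspace Vt" unfolding Vt_def by (rule vec.subspace_span)
  have Vdim: "vec.dim Vt = CARD('n) - t" unfolding Vt_def J_def by (rule dim_target)
  obtain f where f: "lin f" "f ` Vt = U" "inj_on f Vt"
    using vec.subspace_isomorphism[OF Vsub Usub] Vdim Udim by metis
  obtain D where D: "D \<in> cnc" "clifford_act D ` f ` Vt = Vt"
    using elim_image[of f J] f UZ unfolding Vt_def by blast
  define C where "C = D ** C1"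
  have C: "C \<in> clifford_circuits" unfolding C_def by (rule circ_mult[OF cnc_circ[OF D(1)] C1])
  have Cpsi: "C *v \<psi> = w *s ket0"
    unfolding C_def by (simp flip: matrix_vector_mul_assoc add: C1psi mv_scale cnc_ket0[OF D(1)])
  have "eq_up_to_phase (C *v \<psi>) ket0" unfolding eq_up_to_phase_def using Cpsi w by blast
  moreover have "clifford_act C ` Weyl_set \<psi> = {x. \<forall>j. x $ Inl j = 0}"
    using image_weyl[OF C Cpsi w0] Weyl_ket0 by metis
  moreover have "clifford_act C ` T = {x. (\<forall>j. x $ Inl j = 0) \<and> (\<forall>j. qpos j < t \<longrightarrow> x $ Inr j = 0)}"
  proof -
    have "clifford_act C ` T = clifford_act D ` U"
      unfolding C_def U_def act_comp[OF cnc_circ[OF D(1)] C1] by (simp add: image_comp)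
    also have "\<dots> = Vt" using D(2) f(2) by simp
    also have "\<dots> = {x. (\<forall>j. x $ Inl j = 0) \<and> (\<forall>j. qpos j < t \<longrightarrow> x $ Inr j = 0)}"
      unfolding Vt_def J_def by (rule target_span[symmetric])
    finally show ?thesis .
  qed
  ultimately show ?thesis using C by blast
qed

end
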